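(* Let $T_1\subseteq\mathbb{R}^3$ be the closed triangle with vertices $(0,0,0),(0,-1,0),(-1,-1,0)$ and $T_2$ the closed triangle with vertices $(0,0,0),(-1,-1,0),(-1,-1,-1)$. Let $Y=T_1\cup T_2$ with the relative Euclidean topology $\tau$ and the coordinatewise partial order $\preceq$. Then: (i) $(Y,\tau,\preceq)$ is a locally compact, order-connected partially ordered topological space and $(Y,\preceq)$ is a lattice; (ii) the meet operation $\wedge:Y\times Y\to Y$ is not continuous at $((0,0,0),(0,-1,0))$, so $(Y,\tau,\preceq)$ is not a topological $\wedge$-semilattice; (iii) the canonical map $y\mapsto y^\downarrow$ from $(Y,\tau)$ to $(C^\downarrow(Y),\tau_F)$ is not continuous at $(0,0,0)$.
   Context: A partially ordered topological space is a topological space with a partial order whose graph is closed in the product. $y^\downarrow=\{u\in Y:u\preceq y\}$, $y^\uparrow=\{u\in Y:y\preceq u\}$. Order-connected: $x^\uparrow\cap y^\downarrow$ is connected whenever $x\preceq y$. A topological $\wedge$-semilattice is a partially ordered topological space in which every two elements have an infimum and $\wedge$ is continuous. $C(Y)$ = closed subsets of $Y$, $C^\downarrow(Y)=\{y^\downarrow:y\in Y\}$ with the relative Fell topology; the Fell topology $\tau_F$ is generated by the sets $\{A:A\cap O\neq\emptyset\}$ ($O$ open) and $\{A:A\cap D=\emptyset\}$ ($D$ compact). *)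

theory Defs
  imports "HOL-Analysis.Analysis"
begin

text \<open>Points of R^3 are of type real^3; the order on real^3 is the library's
coordinatewise order (less_eq_vec_def).\<close>

definition T1 :: "(real^3) set" where
  "T1 = convex hull {vector [0,0,0], vector [0,-1,0], vector [-1,-1,0]}"

definition T2 :: "(real^3) set" where
  "T2 = convex hull {vector [0,0,0], vector [-1,-1,0], vector [-1,-1,-1]}"

definition Yset :: "(real^3) set" where
  "Yset = T1 \<union> T2"

definition pospace :: "('a::{topological_space,order}) set \<Rightarrow> bool" where
  "pospace Y \<longleftrightarrow>
     closedin (prod_topology (top_of_set Y) (top_of_set Y)) {(x,y). x \<in> Y \<and> y \<in> Y \<and> x \<le> y}"

definition downset :: "('a::order) set \<Rightarrow> 'a \<Rightarrow> 'a set" where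
  "downset Y y = {u \<in> Y. u \<le> y}"

definition upset :: "('a::order) set \<Rightarrow> 'a \<Rightarrow> 'a set" where
  "upset Y y = {u \<in> Y. y \<le> u}"

definition order_connected :: "('a::{topological_space,order}) set \<Rightarrow> bool" where
  "order_connected Y \<longleftrightarrow>
     (\<forall>x\<in>Y. \<forall>y\<in>Y. x \<le> y \<longrightarrow> connected (upset Y x \<inter> downset Y y))"

definition is_inf_in :: "('a::order) set \<Rightarrow> 'a \<Rightarrow> 'a \<Rightarrow> 'a \<Rightarrow> bool" where
  "is_inf_in Y x y z \<longleftrightarrow> z \<in> Y \<and> z \<le> x \<and> z \<le> y \<and> (\<forall>w\<in>Y. w \<le> x \<and> w \<le> y \<longrightarrow> w \<le> z)"

definition is_sup_in :: "('a::order) set \<Rightarrow> 'a \<Rightarrow> 'a \<Rightarrow> 'a \<Rightarrow> bool" where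
  "is_sup_in Y x y z \<longleftrightarrow> z \<in> Y \<and> x \<le> z \<and> y \<le> z \<and> (\<forall>w\<in>Y. x \<le> w \<and> y \<le> w \<longrightarrow> z \<le> w)"

definition is_lattice_on :: "('a::order) set \<Rightarrow> bool" where
  "is_lattice_on Y \<longleftrightarrow>
     (\<forall>x\<in>Y. \<forall>y\<in>Y. (\<exists>z. is_inf_in Y x y z) \<and> (\<exists>z. is_sup_in Y x y z))"

definition meet_in :: "('a::order) set \<Rightarrow> 'a \<Rightarrow> 'a \<Rightarrow> 'a" where
  "meet_in Y x y = (THE z. is_inf_in Y x y z)"

definition top_meet_semilattice :: "('a::{topological_space,order}) set \<Rightarrow> bool" where
  "top_meet_semilattice Y \<longleftrightarrow> pospace Y \<and>
     (\<forall>x\<in>Y. \<forall>y\<in>Y. \<exists>z. is_inf_in Y x y z) \<and>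
     continuous_map (prod_topology (top_of_set Y) (top_of_set Y)) (top_of_set Y)
        (\<lambda>(x,y). meet_in Y x y)"

definition closed_subsets :: "('a::topological_space) set \<Rightarrow> 'a set set" where
  "closed_subsets Y = {A. closedin (top_of_set Y) A}"

definition fell_topology :: "('a::topological_space) set \<Rightarrow> 'a set topology" where
  "fell_topology Y = topology_generated_by
     ({{A \<in> closed_subsets Y. A \<inter> U \<noteq> {}} | U. openin (top_of_set Y) U} \<union>
      {{A \<in> closed_subsets Y. A \<inter> D = {}} | D. compactin (top_of_set Y) D})"

definition down_sets :: "('a::order) set \<Rightarrow> 'a set set" where
  "down_sets Y = downset Y ` Y"

definition continuous_at_point :: "'a topology \<Rightarrow> 'b topology \<Rightarrow> ('a \<Rightarrow> 'b) \<Rightarrow> 'a \<Rightarrow> bool" where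
  "continuous_at_point X X' f x \<longleftrightarrow>
     (\<forall>U. openin X' U \<and> f x \<in> U \<longrightarrow> (\<exists>V. openin X V \<and> x \<in> V \<and> f ` V \<subseteq> U))"

end

theory Submission
  imports Defs
begin

lemma T1_eq: "T1 = {u. u$3 = 0 \<and> -1 \<le> u$2 \<and> u$2 \<le> u$1 \<and> u$1 \<le> 0}"
proof (rule set_eqI, rule iffI)
  fix u assume "u \<in> T1"
  then obtain a b c where "0 \<le> a" "0 \<le> b" "0 \<le> c" "a+b+c = 1"
    "u = a *\<^sub>R vector [0,0,0] + b *\<^sub>R vector [0,-1,0] + c *\<^sub>R vector [-1,-1,0]"
    unfolding T1_def convex_hull_3 by blast
  then show "u \<in> {u. u$3 = 0 \<and> -1 \<le> u$2 \<and> u$2 \<le> u$1 \<and> u$1 \<le> 0}" by auto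
next
  fix u :: "real^3" assume u: "u \<in> {u. u$3 = 0 \<and> -1 \<le> u$2 \<and> u$2 \<le> u$1 \<and> u$1 \<le> 0}"
  have "u = (1 + u$2) *\<^sub>R vector [0,0,0] + (u$1 - u$2) *\<^sub>R vector [0,-1,0] + (- u$1) *\<^sub>R vector [-1,-1,0]"
    using u by (simp add: vec_eq_iff forall_3)
  moreover have "0 \<le> 1 + u$2" "0 \<le> u$1 - u$2" "0 \<le> - u$1" "(1 + u$2) + (u$1 - u$2) + (- u$1) = 1" using u by auto
  ultimately show "u \<in> T1" unfolding T1_def convex_hull_3 by blast
qed

lemma T2_eq: "T2 = {u. u$1 = u$2 \<and> -1 \<le> u$1 \<and> u$1 \<le> u$3 \<and> u$3 \<le> 0}"
proof (rule set_eqI, rule iffI)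
  fix u assume "u \<in> T2"
  then obtain a b c where "0 \<le> a" "0 \<le> b" "0 \<le> c" "a+b+c = 1"
    "u = a *\<^sub>R vector [0,0,0] + b *\<^sub>R vector [-1,-1,0] + c *\<^sub>R vector [-1,-1,-1]"
    unfolding T2_def convex_hull_3 by blast
  then show "u \<in> {u. u$1 = u$2 \<and> -1 \<le> u$1 \<and> u$1 \<le> u$3 \<and> u$3 \<le> 0}" by auto
next
  fix u :: "real^3" assume u: "u \<in> {u. u$1 = u$2 \<and> -1 \<le> u$1 \<and> u$1 \<le> u$3 \<and> u$3 \<le> 0}"
  have "u = (1 + u$1) *\<^sub>R vector [0,0,0] + (u$3 - u$1) *\<^sub>R vector [-1,-1,0] + (- u$3) *\<^sub>R vector [-1,-1,-1]"
    using u by (simp add: vec_eq_iff forall_3)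
  moreover have "0 \<le> 1 + u$1" "0 \<le> u$3 - u$1" "0 \<le> - u$3" "(1 + u$1) + (u$3 - u$1) + (- u$3) = 1" using u by auto
  ultimately show "u \<in> T2" unfolding T2_def convex_hull_3 by blast
qed

lemma Y_eq: "Yset = {u. (u$3 = 0 \<and> -1 \<le> u$2 \<and> u$2 \<le> u$1 \<and> u$1 \<le> 0) \<or> (u$1 = u$2 \<and> -1 \<le> u$1 \<and> u$1 \<le> u$3 \<and> u$3 \<le> 0)}"
  unfolding Yset_def T1_eq T2_eq by auto

lemma compactY: "compact Yset"
  unfolding Yset_def T1_def T2_def by (intro compact_Un compact_convex_hull) auto

lemma lc: "locally_compact_space (top_of_set Yset)"
  by (intro compact_imp_locally_compact_space compact_space_subtopology) (simp add: compactY)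

lemma pos: "pospace Yset"
proof -
  have cl: "closed {p::(real^3)\<times>(real^3). fst p \<le> snd p}"
  proof -
    have "{p::(real^3)\<times>(real^3). fst p \<le> snd p} = (\<Inter>i. {p. fst p $ i \<le> snd p $ i})"
      by (auto simp: less_eq_vec_def)
    moreover have "closed (\<Inter>i. {p::(real^3)\<times>(real^3). fst p $ i \<le> snd p $ i})"
      by (intro closed_INT ballI closed_Collect_le continuous_intros)
    ultimately show ?thesis by simp
  qed
  have "{(x,y). x \<in> Yset \<and> y \<in> Yset \<and> x \<le> y} = (Yset \<times> Yset) \<inter> {p. fst p \<le> snd p}" by auto
  then show ?thesis unfolding pospace_def prod_topology_subtopology_eu
    using closedin_closed_Int[OF cl, of "Yset \<times> Yset"] by simp
qed

lemma oc: "order_connected Yset"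
  unfolding order_connected_def
proof (intro ballI impI)
  fix x y :: "real^3" assume "x \<in> Yset" "y \<in> Yset" "x \<le> y"
  define S where "S = {x..y}"
  have cS: "convex S" unfolding S_def interval_cbox_cart by (rule convex_box)
  have eq: "upset Yset x \<inter> downset Yset y = (T1 \<inter> S) \<union> (T2 \<inter> S)"
    unfolding upset_def downset_def S_def Yset_def by auto
  have c1: "connected (T1 \<inter> S)" "connected (T2 \<inter> S)"
    using cS by (auto intro!: convex_connected convex_Int simp: T1_def T2_def convex_convex_hull)
  show "connected (upset Yset x \<inter> downset Yset y)"
  proof (cases "T1 \<inter> S = {} \<or> T2 \<inter> S = {}")
    case True then show ?thesis unfolding eq using c1 by auto
  next
    case False
    then obtain p q where p: "p \<in> T1 \<inter> S" and q: "q \<in> T2 \<inter> S" by blast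
    define c :: "real^3" where "c = vector [q$1, q$1, 0]"
    have "c \<in> T1 \<inter> S \<inter> (T2 \<inter> S)"
      using p q unfolding c_def T1_eq T2_eq S_def
      by (auto simp: less_eq_vec_def forall_3)
    then show ?thesis unfolding eq using c1 by (intro connected_Un) auto
  qed
qed

definition infY :: "real^3 \<Rightarrow> real^3 \<Rightarrow> real^3" where
  "infY p q = (if p$3 = 0 \<and> q$3 = 0 then vector [min (p$1) (q$1), min (p$2) (q$2), 0]
     else vector [min (min (p$1) (q$1)) (min (p$2) (q$2)), min (min (p$1) (q$1)) (min (p$2) (q$2)), min (p$3) (q$3)])"

lemma Ych: "u \<in> Yset \<longleftrightarrow> -1 \<le> u$2 \<and> u$2 \<le> u$1 \<and> u$1 \<le> 0 \<and> u$3 \<le> 0 \<and> (u$3 = 0 \<or> (u$1 = u$2 \<and> u$1 \<le> u$3))"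
  unfolding Y_eq by auto

lemma le3: "(u::real^3) \<le> v \<longleftrightarrow> u$1 \<le> v$1 \<and> u$2 \<le> v$2 \<and> u$3 \<le> v$3"
  by (simp add: less_eq_vec_def forall_3)

lemma inf_ok: assumes p: "p \<in> Yset" and q: "q \<in> Yset" shows "is_inf_in Yset p q (infY p q)"
proof (cases "p$3 = 0 \<and> q$3 = 0")
  case True
  have z: "infY p q = vector [min (p$1) (q$1), min (p$2) (q$2), 0]" using True by (simp add: infY_def)
  show ?thesis unfolding is_inf_in_def z
  proof (intro conjI ballI impI)
    show "vector [min (p$1) (q$1), min (p$2) (q$2), 0] \<in> Yset" using p q unfolding Ych by auto
    show "vector [min (p$1) (q$1), min (p$2) (q$2), 0] \<le> p" using p True unfolding Ych le3 by auto
    show "vector [min (p$1) (q$1), min (p$2) (q$2), 0] \<le> q" using q True unfolding Ych le3 by auto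
    fix w assume "w \<in> Yset" "w \<le> p \<and> w \<le> q"
    then show "w \<le> vector [min (p$1) (q$1), min (p$2) (q$2), 0]" unfolding Ych le3 by auto
  qed
next
  case False
  define m where "m = min (min (p$1) (q$1)) (min (p$2) (q$2))"
  have z: "infY p q = vector [m, m, min (p$3) (q$3)]" using False unfolding infY_def m_def by (simp only: if_False)
  have m1: "-1 \<le> m" "m \<le> p$1" "m \<le> q$1" "m \<le> p$2" "m \<le> q$2" using p q unfolding Ych m_def by auto
  have m2: "m \<le> p$3" using p m1 unfolding Ych by auto
  have m3: "m \<le> q$3" using q m1 unfolding Ych by auto
  have neg: "min (p$3) (q$3) < 0" using p q False unfolding Ych by auto
  show ?thesis unfolding is_inf_in_def z
  proof (intro conjI ballI impI)
    show "vector [m, m, min (p$3) (q$3)] \<in> Yset" using m1 m2 m3 neg unfolding Ych by auto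
    show "vector [m, m, min (p$3) (q$3)] \<le> p" using m1 unfolding le3 by auto
    show "vector [m, m, min (p$3) (q$3)] \<le> q" using m1 unfolding le3 by auto
    fix w assume w: "w \<in> Yset" "w \<le> p \<and> w \<le> q"
    then have "w$3 < 0" using neg unfolding le3 by auto
    then have "w$1 = w$2" using w(1) unfolding Ych by auto
    then show "w \<le> vector [m, m, min (p$3) (q$3)]" using w unfolding le3 m_def by auto
  qed
qed

lemma sup_ok: assumes p: "p \<in> Yset" and q: "q \<in> Yset"
  shows "is_sup_in Yset p q (vector [max (p$1) (q$1), max (p$2) (q$2), max (p$3) (q$3)])"
  unfolding is_sup_in_def
proof (intro conjI ballI impI)
  have "max (p$3) (q$3) = 0 \<or> (p$1 = p$2 \<and> q$1 = q$2 \<and> p$1 \<le> p$3 \<and> q$1 \<le> q$3)" using p q unfolding Ych by auto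
  then show "vector [max (p$1) (q$1), max (p$2) (q$2), max (p$3) (q$3)] \<in> Yset"
    using p q unfolding Ych by auto
  show "p \<le> vector [max (p$1) (q$1), max (p$2) (q$2), max (p$3) (q$3)]" unfolding le3 by auto
  show "q \<le> vector [max (p$1) (q$1), max (p$2) (q$2), max (p$3) (q$3)]" unfolding le3 by auto
  fix w assume "w \<in> Yset" "p \<le> w \<and> q \<le> w"
  then show "vector [max (p$1) (q$1), max (p$2) (q$2), max (p$3) (q$3)] \<le> w" unfolding le3 by auto
qed

lemma latt: "is_lattice_on Yset"
  unfolding is_lattice_on_def using inf_ok sup_ok by blast


lemma meet_eq: assumes "is_inf_in Y x y z" shows "meet_in Y x y = (z::'a::order)"
  unfolding meet_in_def
proof (rule the_equality)
  show "is_inf_in Y x y z" by fact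
  fix z' assume "is_inf_in Y x y z'"
  then show "z' = z" using assms unfolding is_inf_in_def by (blast intro: antisym)
qed

lemma zero3: "vector [0,0,0] = (0::real^3)"
  by (simp add: vec_eq_iff forall_3)

lemma vY: "0 \<le> d \<Longrightarrow> d \<le> 1 \<Longrightarrow> vector [-d,-d,-d] \<in> Yset"
  unfolding Ych by simp

lemma eY: "vector [0,-1,0] \<in> Yset" unfolding Ych by simp
lemma oY: "vector [0,0,0] \<in> Yset" unfolding Ych by simp

lemma meet_oe: "meet_in Yset (vector [0,0,0]) (vector [0,-1,0]) = vector [0,-1,0]"
proof -
  have "infY (vector [0,0,0]) (vector [0,-1,0]) = vector [0,-1,0]" by (simp add: infY_def)
  then show ?thesis using inf_ok[OF oY eY] meet_eq by metis
qed

lemma meet_ve: assumes "0 < d" "d \<le> 1"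
  shows "meet_in Yset (vector [-d,-d,-d]) (vector [0,-1,0]) = vector [-1,-1,-d]"
proof -
  have "infY (vector [-d,-d,-d]) (vector [0,-1,0]) = vector [-1,-1,-d]"
    using assms by (simp add: infY_def min_def)
  then show ?thesis using inf_ok[OF vY eY] assms meet_eq by (metis less_imp_le)
qed

lemma vscale: "vector [-d,-d,-d] = d *\<^sub>R (vector [-1,-1,-1] :: real^3)"
  by (simp add: vec_eq_iff forall_3)

lemma not_cont: "\<not> continuous (at (vector [0,0,0], vector [0,-1,0]) within Yset \<times> Yset)
              (\<lambda>p. meet_in Yset (fst p) (snd p))"
proof
  assume c: "continuous (at (vector [0,0,0], vector [0,-1,0]) within Yset \<times> Yset)
              (\<lambda>p. meet_in Yset (fst p) (snd p))"
  define d where "d n = inverse (real (Suc n))" for n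
  have d0: "0 < d n" "d n \<le> 1" for n unfolding d_def by (auto simp: field_simps)
  define x where "x n = (vector [-d n,-d n,-d n] :: real^3, vector [0,-1,0] :: real^3)" for n
  have xY: "\<forall>n. x n \<in> Yset \<times> Yset" unfolding x_def using vY d0 eY by (simp add: less_imp_le)
  have "d \<longlonglongrightarrow> 0" unfolding d_def by (rule LIMSEQ_inverse_real_of_nat)
  then have "(\<lambda>n. d n *\<^sub>R (vector [-1,-1,-1] :: real^3)) \<longlonglongrightarrow> 0 *\<^sub>R vector [-1,-1,-1]"
    by (intro tendsto_scaleR tendsto_const)
  moreover have "(\<lambda>n. vector [-d n,-d n,-d n] :: real^3) = (\<lambda>n. d n *\<^sub>R (vector [-1,-1,-1] :: real^3))"
    by (rule ext, rule vscale)
  ultimately have "(\<lambda>n. vector [-d n,-d n,-d n] :: real^3) \<longlonglongrightarrow> vector [0,0,0]"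
    by (simp add: zero3)
  then have "x \<longlonglongrightarrow> (vector [0,0,0], vector [0,-1,0])"
    unfolding x_def by (intro tendsto_Pair tendsto_const)
  with c xY have lim: "((\<lambda>p. meet_in Yset (fst p) (snd p)) \<circ> x) \<longlonglongrightarrow> vector [0,-1,0]"
    unfolding continuous_within_sequentially by (simp add: meet_oe)
  have eqf: "((\<lambda>p. meet_in Yset (fst p) (snd p)) \<circ> x) = (\<lambda>n. vector [-1,-1,-d n])"
    using meet_ve d0 by (auto simp: x_def)
  have "(\<lambda>n. (((\<lambda>p. meet_in Yset (fst p) (snd p)) \<circ> x) n) $ 1) \<longlonglongrightarrow> (vector [0,-1,0] :: real^3) $ 1"
    by (rule tendsto_vec_nth[OF lim])
  then have "(\<lambda>n. (vector [-1,-1,-d n] :: real^3) $ 1) \<longlonglongrightarrow> (vector [0,-1,0] :: real^3) $ 1"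
    unfolding eqf .
  then have "(\<lambda>n. -1::real) \<longlonglongrightarrow> 0" by simp
  then show False using LIMSEQ_unique[OF _ tendsto_const[of "-1::real"]] by fastforce
qed

lemma not_tms: "\<not> top_meet_semilattice Yset"
proof
  assume "top_meet_semilattice Yset"
  then have "continuous_on (Yset \<times> Yset) (\<lambda>(x,y). meet_in Yset x y)"
    unfolding top_meet_semilattice_def prod_topology_subtopology_eu by simp
  then have "continuous (at (vector [0,0,0], vector [0,-1,0]) within Yset \<times> Yset) (\<lambda>(x,y). meet_in Yset x y)"
    using oY eY continuous_on_eq_continuous_within by blast
  then show False using not_cont by (simp add: case_prod_beta')
qed

lemma part3: "\<not> continuous_at_point (top_of_set Yset) (subtopology (fell_topology Yset) (down_sets Yset))
              (downset Yset) (vector [0,0,0])"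
proof
  assume c: "continuous_at_point (top_of_set Yset) (subtopology (fell_topology Yset) (down_sets Yset))
              (downset Yset) (vector [0,0,0])"
  define e :: "real^3" where "e = vector [0,-1,0]"
  define Ob where "Ob = Yset \<inter> ball e (1/2)"
  define U' where "U' = {A \<in> closed_subsets Yset. A \<inter> Ob \<noteq> {}}"
  have oOb: "openin (top_of_set Yset) Ob" unfolding Ob_def by (simp add: openin_open_Int)
  have "openin (fell_topology Yset) U'"
    unfolding fell_topology_def openin_topology_generated_by_iff
    by (rule generate_topology_on.Basis) (use oOb U'_def in blast)
  then have oU: "openin (subtopology (fell_topology Yset) (down_sets Yset)) (U' \<inter> down_sets Yset)"
    by (auto simp: openin_subtopology)
  have dso: "downset Yset (vector [0,0,0]) = Yset"
  proof -
    have "u \<le> vector [0,0,0]" if "u \<in> Yset" for u using that unfolding Ych le3 by auto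
    then show ?thesis unfolding downset_def by auto
  qed
  have "e \<in> Yset \<inter> Ob" unfolding Ob_def e_def using eY by simp
  then have "downset Yset (vector [0,0,0]) \<in> U' \<inter> down_sets Yset"
    unfolding dso U'_def closed_subsets_def down_sets_def
    using oY dso by (auto intro: image_eqI[where x="vector [0,0,0]"])
  with c oU obtain V where V: "openin (top_of_set Yset) V" "vector [0,0,0] \<in> V"
    "downset Yset ` V \<subseteq> U' \<inter> down_sets Yset"
    unfolding continuous_at_point_def by blast
  then obtain r where r: "r > 0" "\<forall>x'\<in>Yset. dist x' (vector [0,0,0]) < r \<longrightarrow> x' \<in> V"
    unfolding openin_euclidean_subtopology_iff by blast
  define d where "d = min (r/4) (1/2)"
  have d: "0 < d" "d \<le> 1" "3 * d < r" unfolding d_def using r by auto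
  define v :: "real^3" where "v = vector [-d,-d,-d]"
  have "norm v \<le> (\<Sum>i\<in>UNIV. \<bar>v$i\<bar>)" by (rule norm_le_l1_cart)
  also have "\<dots> = 3 * d" unfolding v_def sum_3 using d by simp
  finally have "dist v (vector [0,0,0]) < r" using d by (simp add: zero3 dist_norm)
  moreover have vY': "v \<in> Yset" unfolding v_def using vY d by simp
  ultimately have "v \<in> V" using r by blast
  then have "downset Yset v \<in> U'" using V by blast
  then obtain u where u: "u \<in> downset Yset v" "u \<in> Ob" unfolding U'_def by blast
  then have uY: "u \<in> Yset" "u \<le> v" unfolding downset_def by auto
  then have "u$3 < 0" unfolding le3 v_def using d by auto
  then have u12: "u$1 = u$2" using uY unfolding Ych by auto
  have de: "dist e u < 1/2" using u unfolding Ob_def by auto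
  have "\<bar>(e - u)$1\<bar> \<le> norm (e - u)" "\<bar>(e - u)$2\<bar> \<le> norm (e - u)" by (rule component_le_norm_cart)+
  then have "\<bar>u$1\<bar> < 1/2" "\<bar>-1 - u$2\<bar> < 1/2" using de unfolding dist_norm e_def by auto
  then show False using u12 by auto
qed

theorem mainTheorem8:
  shows "(locally_compact_space (top_of_set Yset) \<and> order_connected Yset \<and> pospace Yset
          \<and> is_lattice_on Yset)
       \<and> (\<not> continuous (at (vector [0,0,0], vector [0,-1,0]) within Yset \<times> Yset)
              (\<lambda>p. meet_in Yset (fst p) (snd p))
          \<and> \<not> top_meet_semilattice Yset)
       \<and> \<not> continuous_at_point (top_of_set Yset) (subtopology (fell_topology Yset) (down_sets Yset))
              (downset Yset) (vector [0,0,0])"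
  using lc oc pos latt not_cont not_tms part3 by blast

end
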